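(* Let $\alpha,\beta,\gamma\in\mathrm{ord}$. If $\alpha<\gamma$ and $\beta<\gamma$, then $\sup(\alpha,\beta)<\gamma$.
   Context: Work constructively. Let $\mathfrak F$ be a set of index sets containing $\mathbb N$ and each $\mathbb N_k=\{n\in\mathbb N:n<k\}$ ($k\ge0$), closed (up to isomorphism) under finitely enumerated subsets, sets of finitely enumerated subsets, and disjoint unions indexed by elements of $\mathfrak F$. A finitely enumerated subset of $A$ is one given by a map $\mathbb N_k\to A$; write $F\subseteq_f I$. The set $\mathrm{ord}$ is inductively generated by $\underline 0$ and, for every family $(\alpha_i)_{i\in I}$ with $I\in\mathfrak F$, $\alpha_i\in\mathrm{ord}$, an element $\mathrm S(\alpha_i)_{i\in I}$; elements of the second kind form $\mathrm{ord}^*$; for such $\alpha$, $I_\alpha=I$ and $\alpha_i$ are its definitional subordinals; $I_{\underline 0}=\emptyset$. For a finite list $F$ in $I_\alpha$, $\alpha_F$ is the list of the $\alpha_i$, $i\in F$. Supremum: for a family $(\alpha^j)_{j\in J}$ in $\mathrm{ord}^*$, $J\in\mathfrak F$, $\sup(\alpha^j)_{j\in J}=\mathrm S(\varepsilon_k)_{k\in K}$ with $K$ the disjoint union of the $I_{\alpha^j}$ (injections $\iota_j$) and $\varepsilon_{\iota_j(i)}=(\alpha^j)_i$; for a finite family in $\mathrm{ord}$, $\sup(\alpha^1,\dots,\alpha^r)$ is $\underline0$ if all are $\underline0$, else the sup of those in $\mathrm{ord}^*$. Relations between an element and a nonempty finite list, by simultaneous induction: $\alpha\le\beta^1,\dots,\beta^m$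 means $\alpha_i<\beta^1,\dots,\beta^m$ for all $i\in I_\alpha$; $\alpha<\beta^1,\dots,\beta^m$ means there exist $F_1\subseteq_f I_{\beta^1},\dots,F_m\subseteq_f I_{\beta^m}$, not all empty, with $\alpha\le\beta^1_{F_1},\dots,\beta^m_{F_m}$ (concatenated list); $\alpha<\gamma$ is the case $m=1$. *)

theory Defs
  imports Main
begin

text \<open>Ordinal notation trees. Index sets are subsets of a universe type 'i;
  the family (alpha_i) for i in I is a function on 'i whose values outside I are irrelevant.\<close>

datatype 'i ord = OZero | OS "'i set" "'i \<Rightarrow> 'i ord"

fun idx :: "'i ord \<Rightarrow> 'i set" where
  "idx OZero = {}"
| "idx (OS I f) = I"

fun sub :: "'i ord \<Rightarrow> 'i \<Rightarrow> 'i ord" where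
  "sub OZero i = OZero"
| "sub (OS I f) i = f i"

primrec ordF :: "'i set set \<Rightarrow> 'i ord \<Rightarrow> bool" where
  "ordF F OZero = True"
| "ordF F (OS I f) = (I \<in> F \<and> (\<forall>i\<in>I. ordF F (f i)))"

text \<open>Fs selects finitely enumerated subsets F_1..F_m of I_{beta^1}..I_{beta^m}, not all empty.\<close>
definition sels :: "'i ord list \<Rightarrow> 'i list list \<Rightarrow> bool" where
  "sels bs Fs \<longleftrightarrow> length Fs = length bs \<and> (\<forall>j<length bs. set (Fs ! j) \<subseteq> idx (bs ! j))
     \<and> (\<exists>j<length bs. Fs ! j \<noteq> [])"

definition subl :: "'i ord list \<Rightarrow> 'i list list \<Rightarrow> 'i ord list" where
  "subl bs Fs = concat (map2 (\<lambda>b F. map (sub b) F) bs Fs)"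

text \<open>alpha \<le> beta^1..beta^m  iff  alpha_i < beta^1..beta^m for all i, where
  alpha < bs iff exists a selection Fs with alpha \<le> subl bs Fs (unfolded inline).\<close>
primrec ord_le :: "'i ord \<Rightarrow> 'i ord list \<Rightarrow> bool" where
  "ord_le OZero bs = True"
| "ord_le (OS I f) bs = (\<forall>i\<in>I. \<exists>Fs. sels bs Fs \<and> ord_le (f i) (subl bs Fs))"

definition ord_lt :: "'i ord \<Rightarrow> 'i ord list \<Rightarrow> bool" where
  "ord_lt a bs \<longleftrightarrow> (\<exists>Fs. sels bs Fs \<and> ord_le a (subl bs Fs))"

definition ord_less :: "'i ord \<Rightarrow> 'i ord \<Rightarrow> bool" where
  "ord_less a c \<longleftrightarrow> ord_lt a [c]"

lemma ord_le_OS_lt: "ord_le (OS I f) bs \<longleftrightarrow> (\<forall>i\<in>I. ord_lt (f i) bs)"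
  by (simp add: ord_lt_def)

text \<open>Binary supremum; the disjoint union I_alpha \<squnion> I_beta is realised via injections
  inl, inr with disjoint ranges. Since I_0 is empty, this covers the cases where one is 0.\<close>
definition ord_sup2 :: "('i \<Rightarrow> 'i) \<Rightarrow> ('i \<Rightarrow> 'i) \<Rightarrow> 'i ord \<Rightarrow> 'i ord \<Rightarrow> 'i ord" where
  "ord_sup2 inl inr a b =
    (if a = OZero \<and> b = OZero then OZero
     else OS (inl ` idx a \<union> inr ` idx b)
             (\<lambda>k. if k \<in> inl ` idx a then sub a (inv inl k) else sub b (inv inr k)))"

end

theory Submission
  imports Defs
begin

lemma set_subl:
  "length Fs = length bs \<Longrightarrow>
   set (subl bs Fs) = (\<Union>j<length bs. sub (bs!j) ` set (Fs!j))"
  unfolding subl_def by (auto simp: set_zip)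

lemma lift:
  assumes "sels xs Fs" "set xs \<subseteq> set ys"
  shows "\<exists>Fs'. sels ys Fs' \<and> set (subl xs Fs) \<subseteq> set (subl ys Fs')"
proof -
  define Fs' where "Fs' = map (\<lambda>y. concat (map (\<lambda>j. if xs!j = y then Fs!j else []) [0..<length xs])) ys"
  have len: "length Fs = length xs" "length Fs' = length ys"
    using assms(1) by (auto simp: sels_def Fs'_def)
  have nth0: "\<And>j'. j' < length ys \<Longrightarrow> set (Fs'!j') = (\<Union>j\<in>set [0..<length xs]. set (if xs!j = ys!j' then Fs!j else []))"
  proof -
    fix j' assume "j' < length ys"
    then have "Fs'!j' = concat (map (\<lambda>j. if xs!j = ys!j' then Fs!j else []) [0..<length xs])"
      unfolding Fs'_def by simp
    then show "set (Fs'!j') = (\<Union>j\<in>set [0..<length xs]. set (if xs!j = ys!j' then Fs!j else []))"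
      by (simp only: set_concat set_map image_image)
  qed
  have nth: "\<And>j' i. j' < length ys \<Longrightarrow> i \<in> set (Fs'!j') \<longleftrightarrow> (\<exists>j<length xs. xs!j = ys!j' \<and> i \<in> set (Fs!j))"
  proof -
    fix j' i assume "j' < length ys"
    then have "i \<in> set (Fs'!j') \<longleftrightarrow> (\<exists>j\<in>set [0..<length xs]. i \<in> set (if xs!j = ys!j' then Fs!j else []))"
      using nth0 by blast
    also have "\<dots> \<longleftrightarrow> (\<exists>j<length xs. xs!j = ys!j' \<and> i \<in> set (Fs!j))" by auto
    finally show "i \<in> set (Fs'!j') \<longleftrightarrow> (\<exists>j<length xs. xs!j = ys!j' \<and> i \<in> set (Fs!j))" .
  qed
  have sub0: "\<forall>j<length xs. set (Fs ! j) \<subseteq> idx (xs ! j)" using assms(1) unfolding sels_def by blast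
  have sub1: "\<forall>j<length ys. set (Fs' ! j) \<subseteq> idx (ys ! j)"
  proof (intro allI impI subsetI)
    fix j0 x assume j0: "j0 < length ys" and x: "x \<in> set (Fs'!j0)"
    then obtain j where "j < length xs" "xs!j = ys!j0" "x \<in> set (Fs!j)" using nth by blast
    then show "x \<in> idx (ys!j0)" using sub0 by force
  qed
  obtain j where j: "j < length xs" "Fs!j \<noteq> []" using assms(1) unfolding sels_def by auto
  then obtain i where i: "i \<in> set (Fs!j)" by (cases "Fs!j") auto
  have "xs!j \<in> set ys" using assms(2) j(1) by (simp add: subset_iff)
  then obtain j' where j': "j' < length ys" "ys!j' = xs!j" by (auto simp: in_set_conv_nth)
  have "i \<in> set (Fs'!j')" using nth[OF j'(1)] i j j' by auto
  then have "Fs'!j' \<noteq> []" by auto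
  then have s1: "sels ys Fs'" unfolding sels_def using sub1 len(2) j'(1) by blast
  have s2: "set (subl xs Fs) \<subseteq> set (subl ys Fs')"
  proof
    fix x assume "x \<in> set (subl xs Fs)"
    then obtain j i where ji: "x = sub (xs!j) i" "j < length xs" "i \<in> set (Fs!j)"
      using set_subl[OF len(1)] by auto
    have "xs!j \<in> set ys" using assms(2) ji(2) by (simp add: subset_iff)
    then obtain j' where j': "j' < length ys" "ys!j' = xs!j" by (auto simp: in_set_conv_nth)
    have "i \<in> set (Fs'!j')" using nth[OF j'(1)] ji j' by auto
    then have "x \<in> sub (ys!j') ` set (Fs'!j')" using ji j' by simp
    then have "x \<in> (\<Union>j<length ys. sub (ys!j) ` set (Fs'!j))" using j'(1) by (meson UN_iff lessThan_iff)
    then show "x \<in> set (subl ys Fs')" using set_subl[OF len(2)] by simp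
  qed
  show ?thesis using s1 s2 by blast
qed
lemma mono_le: "ord_le a xs \<Longrightarrow> set xs \<subseteq> set ys \<Longrightarrow> ord_le a ys"
proof (induction a arbitrary: xs ys)
  case OZero
  then show ?case by simp
next
  case (OS I f)
  show ?case
  proof (simp, intro ballI)
    fix i assume i: "i \<in> I"
    then obtain Fs where Fs: "sels xs Fs" "ord_le (f i) (subl xs Fs)" using OS.prems by auto
    obtain Fs' where "sels ys Fs'" "set (subl xs Fs) \<subseteq> set (subl ys Fs')"
      using lift[OF Fs(1) OS.prems(2)] by blast
    then show "\<exists>Fs. sels ys Fs \<and> ord_le (f i) (subl ys Fs)"
      using OS.IH[of "f i"] Fs(2) by blast
  qed
qed

lemma mono_lt: assumes "ord_lt a xs" "set xs \<subseteq> set ys" shows "ord_lt a ys"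
proof -
  obtain Fs where Fs: "sels xs Fs" "ord_le a (subl xs Fs)" using assms(1) unfolding ord_lt_def by blast
  obtain Fs' where Fs': "sels ys Fs'" "set (subl xs Fs) \<subseteq> set (subl ys Fs')"
    using lift[OF Fs(1) assms(2)] by blast
  have "ord_le a (subl ys Fs')" using mono_le[OF Fs(2) Fs'(2)] .
  then show ?thesis unfolding ord_lt_def using Fs'(1) by blast
qed

lemma less_char: "ord_less a c \<longleftrightarrow> (\<exists>G. G \<noteq> [] \<and> set G \<subseteq> idx c \<and> ord_le a (map (sub c) G))"
proof
  assume "ord_less a c"
  then obtain Fs where "sels [c] Fs" "ord_le a (subl [c] Fs)" unfolding ord_less_def ord_lt_def by auto
  then show "\<exists>G. G \<noteq> [] \<and> set G \<subseteq> idx c \<and> ord_le a (map (sub c) G)"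
    unfolding sels_def subl_def by (cases Fs) auto
next
  assume "\<exists>G. G \<noteq> [] \<and> set G \<subseteq> idx c \<and> ord_le a (map (sub c) G)"
  then obtain G where "G \<noteq> []" "set G \<subseteq> idx c" "ord_le a (map (sub c) G)" by auto
  then show "ord_less a c" unfolding ord_less_def ord_lt_def sels_def subl_def
    by (intro exI[of _ "[G]"]) auto
qed

lemma le_sub: "ord_le a bs \<Longrightarrow> i \<in> idx a \<Longrightarrow> ord_lt (sub a i) bs"
  by (cases a) (auto simp: ord_lt_def)

theorem lemma4p4:
  fixes inl inr :: "'i \<Rightarrow> 'i" and F :: "'i set set" and \<alpha> \<beta> \<gamma> :: "'i ord"
  assumes "inj inl" and "inj inr" and "range inl \<inter> range inr = {}"
    and "ordF F \<alpha>" and "ordF F \<beta>" and "ordF F \<gamma>"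
    and "ord_less \<alpha> \<gamma>" and "ord_less \<beta> \<gamma>"
  shows "ord_less (ord_sup2 inl inr \<alpha> \<beta>) \<gamma>"
proof -
  obtain G1 where G1: "G1 \<noteq> []" "set G1 \<subseteq> idx \<gamma>" "ord_le \<alpha> (map (sub \<gamma>) G1)"
    using assms(7)[unfolded less_char] by (elim exE conjE)
  obtain G2 where G2: "G2 \<noteq> []" "set G2 \<subseteq> idx \<gamma>" "ord_le \<beta> (map (sub \<gamma>) G2)"
    using assms(8)[unfolded less_char] by (elim exE conjE)
  let ?bs = "map (sub \<gamma>) (G1 @ G2)"
  have A: "\<And>i. i \<in> idx \<alpha> \<Longrightarrow> ord_lt (sub \<alpha> i) ?bs"
  proof -
    fix i assume "i \<in> idx \<alpha>"
    moreover have "set (map (sub \<gamma>) G1) \<subseteq> set ?bs" by auto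
    ultimately show "ord_lt (sub \<alpha> i) ?bs" using mono_lt le_sub[OF G1(3)] by blast
  qed
  have B: "\<And>i. i \<in> idx \<beta> \<Longrightarrow> ord_lt (sub \<beta> i) ?bs"
  proof -
    fix i assume "i \<in> idx \<beta>"
    moreover have "set (map (sub \<gamma>) G2) \<subseteq> set ?bs" by auto
    ultimately show "ord_lt (sub \<beta> i) ?bs" using mono_lt le_sub[OF G2(3)] by blast
  qed
  have "ord_le (ord_sup2 inl inr \<alpha> \<beta>) ?bs"
  proof (cases "\<alpha> = OZero \<and> \<beta> = OZero")
    case True
    then have "ord_sup2 inl inr \<alpha> \<beta> = OZero" unfolding ord_sup2_def by (rule if_P)
    then show ?thesis by (simp only: ord_le.simps(1))
  next
    case False
    have eq: "ord_sup2 inl inr \<alpha> \<beta> = OS (inl ` idx \<alpha> \<union> inr ` idx \<beta>)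
             (\<lambda>k. if k \<in> inl ` idx \<alpha> then sub \<alpha> (inv inl k) else sub \<beta> (inv inr k))"
      unfolding ord_sup2_def using False by (rule if_not_P)
    show ?thesis unfolding eq ord_le_OS_lt
    proof (intro ballI)
      fix k assume k: "k \<in> inl ` idx \<alpha> \<union> inr ` idx \<beta>"
      show "ord_lt (if k \<in> inl ` idx \<alpha> then sub \<alpha> (inv inl k) else sub \<beta> (inv inr k)) ?bs"
      proof (cases "k \<in> inl ` idx \<alpha>")
        case True
        then obtain i where i: "i \<in> idx \<alpha>" "k = inl i" by blast
        have "inv inl k = i" using i(2) inv_f_f[OF assms(1)] by blast
        then show ?thesis unfolding if_P[OF True] using A[OF i(1)] by (simp only:)
      next
        case False
        then obtain i where i: "i \<in> idx \<beta>" "k = inr i" using k by blast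
        have "inv inr k = i" using i(2) inv_f_f[OF assms(2)] by blast
        then show ?thesis unfolding if_not_P[OF False] using B[OF i(1)] by (simp only:)
      qed
    qed
  qed
  moreover have "G1 @ G2 \<noteq> []" "set (G1 @ G2) \<subseteq> idx \<gamma>" using G1 G2 by auto
  ultimately show ?thesis unfolding less_char by (intro exI[of _ "G1 @ G2"]) (simp only: simp_thms)
qed

end
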